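(* Let $\mathbf{X},\mathbf{Y},\mathbf{Z}$ be finite non-empty sets, $N\ge1$ fixed, and let $(X_n,Y_n,Z_n)$, $n=1,\dots,N$, be random elements of $\mathbf{X}\times\mathbf{Y}\times\mathbf{Z}$ on a common probability space. Suppose there are a probability distribution $\pi$ on $\mathbf{Z}$ and probability distributions $q(\cdot\mid x,z)$ on $\mathbf{Y}$, $(x,z)\in\mathbf{X}\times\mathbf{Z}$, such that for every $n\in[N]$, writing $\mathcal{H}_{n-1}:=\sigma\bigl((X_i,Y_i,Z_i):i<n\bigr)$: (i) conditionally on $\mathcal{H}_{n-1}$, $Z_n$ has distribution $\pi$; (ii) the conditional distribution of $X_n$ given $\mathcal{H}_{n-1}$ and $Z_n$ is arbitrary; (iii) conditionally on $\sigma(\mathcal{H}_{n-1},Z_n,X_n)$, $Y_n$ has distribution $q(\cdot\mid X_n,Z_n)$. Fix $\delta>0$, $\tilde x\in\mathbf{X}$, $y\in\mathbf{Y}$, and let $P(y\mid\mathrm{do}(\tilde x)):=\sum_{z\in\mathbf{Z}}q(y\mid\tilde x,z)\pi(z)$. Let \[ m:=\sum_{z\in\mathbf{Z}}\hat p(z)\,\check p(y\mid\tilde x,z),\qquad h:=|\mathbf{Z}|\sqrt{\frac{\ln\frac{4|\mathbf{Z}|}{\delta}}{2N}}+\sum_{z\in\mathbf{Z}}\sqrt{\frac{2\ln\log_2\lfloor\!\lfloor\#\tilde x z\rfloor\!\rfloor+\ln\frac{6.6|\mathbf{Z}|}{\delta}}{2\lfloor\!\lfloor\#\tilde x z\rfloor\!\rfloor}},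 \] with the convention $\ln\log_2 1:=\infty$ (so $h=\infty$ unless $\#\tilde x z\ge2$ for all $z$). Then $\mathbb{P}\bigl(P(y\mid\mathrm{do}(\tilde x))\in[m-h,m+h]\bigr)\ge1-\delta$.
   Context: This models the "strong interpretation" of a repeated causal diagram in which $Z$ satisfies the back-door criterion relative to $(X,Y)$: $X_n$ is a decision that may depend on all past observations. Notation: for $m\le N$, $\#_m \tilde x z:=|\{n\in[m]:(X_n,Z_n)=(\tilde x,z)\}|$, $\#\tilde x z:=\#_N\tilde x z$, $\#z:=|\{n\in[N]:Z_n=z\}|$, $\hat p(z):=\#z/N$. For an integer $n\ge2$, $\lfloor\!\lfloor n\rfloor\!\rfloor$ is the largest number of the form $2^k$, $k\in\{1,2,\dots\}$, with $2^k\le n$; for $n<2$, $\lfloor\!\lfloor n\rfloor\!\rfloor:=1$. The estimate \[ \check p(y\mid\tilde x,z):=\frac{|\{n\in[N]:\#_n\tilde x z\le\lfloor\!\lfloor\#\tilde x z\rfloor\!\rfloor,\ X_n=\tilde x,\ Y_n=y,\ Z_n=z\}|}{\lfloor\!\lfloor\#\tilde x z\rfloor\!\rfloor} \] is the fraction of the first $\lfloor\!\lfloor\#\tilde x z\rfloor\!\rfloor$ observations with $(X_n,Z_n)=(\tilde x,z)$ for which $Y_n=y$ (its value is irrelevant when $h=\infty$). *)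

theory Defs
  imports "HOL-Probability.Probability"
begin

definition pow2floor :: "nat \<Rightarrow> nat" where
  "pow2floor n = (if n < 2 then 1 else 2 ^ (GREATEST k. 1 \<le> k \<and> 2 ^ k \<le> n))"

definition cnt :: "(nat \<Rightarrow> 'x) \<Rightarrow> (nat \<Rightarrow> 'z) \<Rightarrow> nat \<Rightarrow> 'x \<Rightarrow> 'z \<Rightarrow> nat" where
  "cnt xs zs m x z = card {n \<in> {1..m}. xs n = x \<and> zs n = z}"

definition phat :: "(nat \<Rightarrow> 'z) \<Rightarrow> nat \<Rightarrow> 'z \<Rightarrow> real" where
  "phat zs N z = real (card {n \<in> {1..N}. zs n = z}) / real N"

definition pcheck :: "(nat \<Rightarrow> 'x) \<Rightarrow> (nat \<Rightarrow> 'y) \<Rightarrow> (nat \<Rightarrow> 'z) \<Rightarrow> nat \<Rightarrow> 'y \<Rightarrow> 'x \<Rightarrow> 'z \<Rightarrow> real" where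
  "pcheck xs ys zs N y x z =
     real (card {n \<in> {1..N}. cnt xs zs n x z \<le> pow2floor (cnt xs zs N x z)
                             \<and> xs n = x \<and> ys n = y \<and> zs n = z})
     / real (pow2floor (cnt xs zs N x z))"

definition m_est :: "(nat \<Rightarrow> 'x) \<Rightarrow> (nat \<Rightarrow> 'y) \<Rightarrow> (nat \<Rightarrow> 'z::finite) \<Rightarrow> nat \<Rightarrow> 'y \<Rightarrow> 'x \<Rightarrow> real" where
  "m_est xs ys zs N y x = (\<Sum>z\<in>UNIV. phat zs N z * pcheck xs ys zs N y x z)"

text \<open>The half-width h, as a real number; it is only meaningful (finite) when
  cnt N x z \<ge> 2 for all z.  Otherwise h = \<infinity> (handled in the statement).\<close>
definition h_est :: "(nat \<Rightarrow> 'x) \<Rightarrow> (nat \<Rightarrow> 'z::finite) \<Rightarrow> nat \<Rightarrow> real \<Rightarrow> 'x \<Rightarrow> real" where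
  "h_est xs zs N \<delta> x =
     real CARD('z) * sqrt (ln (4 * real CARD('z) / \<delta>) / (2 * real N))
     + (\<Sum>z\<in>UNIV. sqrt ((2 * ln (log 2 (real (pow2floor (cnt xs zs N x z))))
                            + ln (6.6 * real CARD('z) / \<delta>))
                           / (2 * real (pow2floor (cnt xs zs N x z)))))"

definition in_ci :: "(nat \<Rightarrow> 'x) \<Rightarrow> (nat \<Rightarrow> 'y) \<Rightarrow> (nat \<Rightarrow> 'z::finite) \<Rightarrow> nat \<Rightarrow> real \<Rightarrow> 'y \<Rightarrow> 'x \<Rightarrow> real \<Rightarrow> bool" where
  "in_ci xs ys zs N \<delta> y x p =
     ((\<exists>z. cnt xs zs N x z < 2) \<or>
      (m_est xs ys zs N y x - h_est xs zs N \<delta> x \<le> p \<and> p \<le> m_est xs ys zs N y x + h_est xs zs N \<delta> x))"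

end

theory Submission
  imports Defs
begin


lemma bern_hoeff:
  fixes p l :: real
  assumes "0 \<le> p" "p \<le> 1"
  shows "p * exp (l * (1 - p)) + (1 - p) * exp (- l * p) \<le> exp (l\<^sup>2 / 8)"
proof -
  have gen: "p * exp (h * (1 - p)) + (1 - p) * exp (- h * p) \<le> exp (h\<^sup>2 / 8)"
    if "h \<ge> 0" "0 \<le> p" "p \<le> 1" for h p :: real
  proof -
    have pos: "1 + p * (exp h - 1) > 0"
      using that by (intro add_pos_nonneg mult_nonneg_nonneg) auto
    have "-h * p + ln (1 + p * (exp h - 1)) \<le> h\<^sup>2 / 8"
      using Hoeffdings_lemma_aux[of h p] that by simp
    hence "exp (-h * p + ln (1 + p * (exp h - 1))) \<le> exp (h\<^sup>2 / 8)" by simp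
    also have "exp (-h * p + ln (1 + p * (exp h - 1))) = exp (-h*p) * (1 + p * (exp h - 1))"
      using pos by (simp add: exp_diff exp_minus field_simps)
    also have "\<dots> = p * exp (h * (1 - p)) + (1 - p) * exp (- h * p)"
      by (simp add: algebra_simps exp_add[symmetric])
    finally show ?thesis .
  qed
  show ?thesis
  proof (cases "l \<ge> 0")
    case True thus ?thesis using gen[of l p] assms by simp
  next
    case False
    have "(1 - p) * exp ((-l) * (1 - (1 - p))) + (1 - (1 - p)) * exp (- (-l) * (1 - p)) \<le> exp ((-l)\<^sup>2 / 8)"
      using gen[of "-l" "1 - p"] assms False by simp
    thus ?thesis by (simp add: algebra_simps)
  qed
qed

lemma card_Suc_interval:
  "card {n \<in> {1..Suc i}. P n} = card {n \<in> {1..i}. P n} + (if P (Suc i) then 1 else 0)"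
proof -
  have "{n \<in> {1..Suc i}. P n} = {n \<in> {1..i}. P n} \<union> (if P (Suc i) then {Suc i} else {})"
    by (auto simp: le_Suc_eq)
  thus ?thesis by auto
qed

definition trL :: "(nat \<Rightarrow> 'x) \<Rightarrow> (nat \<Rightarrow> 'y) \<Rightarrow> (nat \<Rightarrow> 'z) \<Rightarrow> nat \<Rightarrow> ('x \<times> 'y \<times> 'z) list" where
  "trL xs ys zs i = map (\<lambda>n. (xs n, ys n, zs n)) [1..<Suc i]"

lemma trL_0[simp]: "trL xs ys zs 0 = []" by (simp add: trL_def)
lemma trL_Suc: "trL xs ys zs (Suc i) = trL xs ys zs i @ [(xs (Suc i), ys (Suc i), zs (Suc i))]"
  by (simp add: trL_def)
lemma length_trL[simp]: "length (trL xs ys zs i) = i" by (simp add: trL_def)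

definition acc :: "('t list \<Rightarrow> 't \<Rightarrow> real) \<Rightarrow> 't list \<Rightarrow> real" where
  "acc g h = (\<Sum>j<length h. g (take j h) (h ! j))"

lemma acc_Nil[simp]: "acc g [] = 0" by (simp add: acc_def)
lemma acc_snoc: "acc g (h @ [t]) = acc g h + g h t"
  unfolding acc_def by (simp add: nth_append)

definition cntL :: "'x \<Rightarrow> 'z \<Rightarrow> ('x \<times> 'y \<times> 'z) list \<Rightarrow> nat" where
  "cntL x z h = length (filter (\<lambda>t. fst t = x \<and> snd (snd t) = z) h)"

lemma cnt_Suc: "cnt xs zs (Suc i) x z = cnt xs zs i x z + (if xs (Suc i) = x \<and> zs (Suc i) = z then 1 else 0)"
  unfolding cnt_def by (rule card_Suc_interval)

lemma cntL_trL: "cntL x z (trL xs ys zs i) = cnt xs zs i x z"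
  by (induction i) (simp add: cnt_def cntL_def, simp add: trL_Suc cnt_Suc cntL_def)

lemma cnt_le: "cnt xs zs i x z \<le> i"
proof -
  have "cnt xs zs i x z \<le> card {1..i}" unfolding cnt_def by (rule card_mono) auto
  thus ?thesis by simp
qed

definition dA :: "'z \<Rightarrow> real \<Rightarrow> ('x \<times> 'y \<times> 'z) list \<Rightarrow> ('x \<times> 'y \<times> 'z) \<Rightarrow> real" where
  "dA z0 p0 h t = (if snd (snd t) = z0 then 1 else 0) - p0"

lemma acc_one: "acc (\<lambda>h t. 1) h = real (length h)"
  by (simp add: acc_def)

lemma acc_dA: "acc (dA z0 p0) (trL xs ys zs i) = real (card {n \<in> {1..i}. zs n = z0}) - real i * p0"
proof (induction i)
  case 0 thus ?case by simp
next
  case (Suc i)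
  show ?case
    unfolding trL_Suc acc_snoc Suc card_Suc_interval by (simp add: dA_def algebra_simps)
qed

definition selB :: "'x \<Rightarrow> 'z \<Rightarrow> nat \<Rightarrow> ('x \<times> 'y \<times> 'z) list \<Rightarrow> ('x \<times> 'y \<times> 'z) \<Rightarrow> bool" where
  "selB xt z0 K h t = (fst t = xt \<and> snd (snd t) = z0 \<and> cntL xt z0 h < K)"

definition dB :: "'x \<Rightarrow> 'y \<Rightarrow> 'z \<Rightarrow> nat \<Rightarrow> real \<Rightarrow> ('x \<times> 'y \<times> 'z) list \<Rightarrow> ('x \<times> 'y \<times> 'z) \<Rightarrow> real" where
  "dB xt y0 z0 K q0 h t = (if selB xt z0 K h t then (if fst (snd t) = y0 then 1 else 0) - q0 else 0)"

definition cB :: "'x \<Rightarrow> 'z \<Rightarrow> nat \<Rightarrow> ('x \<times> 'y \<times> 'z) list \<Rightarrow> ('x \<times> 'y \<times> 'z) \<Rightarrow> real" where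
  "cB xt z0 K h t = (if selB xt z0 K h t then 1 else 0)"

lemma acc_cB: "acc (cB xt z0 K) (trL xs ys zs i) = real (min (cnt xs zs i xt z0) K)"
proof (induction i)
  case 0 thus ?case by (simp add: cnt_def)
next
  case (Suc i)
  show ?case
    unfolding trL_Suc acc_snoc Suc cnt_Suc by (simp add: cB_def selB_def cntL_trL)
qed

lemma acc_dB: "acc (dB xt y0 z0 K q0) (trL xs ys zs i) =
   real (card {n \<in> {1..i}. cnt xs zs n xt z0 \<le> K \<and> xs n = xt \<and> ys n = y0 \<and> zs n = z0})
   - q0 * real (min (cnt xs zs i xt z0) K)"
proof (induction i)
  case 0 thus ?case by (simp add: cnt_def)
next
  case (Suc i)
  show ?case
    unfolding trL_Suc acc_snoc Suc card_Suc_interval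
    by (auto simp: cnt_Suc dB_def selB_def cntL_trL algebra_simps)
qed



lemma finite_len: "finite {h :: ('a::finite) list. length h = n}"
  using finite_lists_length_eq[of "UNIV :: 'a set" n] by simp

lemma sum_lists_Suc:
  fixes f :: "('a::finite) list \<Rightarrow> real"
  shows "(\<Sum>h\<in>{h. length h = Suc n}. f h) = (\<Sum>h\<in>{h. length h = n}. \<Sum>t\<in>UNIV. f (h @ [t]))"
proof -
  have eq: "{h::'a list. length h = Suc n} = (\<lambda>(h,t). h @ [t]) ` ({h. length h = n} \<times> UNIV)"
  proof -
    { fix h :: "'a list" assume "length h = Suc n"
      then obtain h' t where "h = h' @ [t]" "length h' = n" by (metis length_Suc_conv_rev)
      hence "h \<in> (\<lambda>(h,t). h @ [t]) ` ({h. length h = n} \<times> UNIV)" by force }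
    thus ?thesis by auto
  qed
  have inj: "inj_on (\<lambda>(h,t). h @ [t]) ({h::'a list. length h = n} \<times> UNIV)"
    by (auto simp: inj_on_def)
  show ?thesis
    unfolding eq by (subst sum.reindex[OF inj]) (simp add: sum.cartesian_product comp_def split_beta)
qed

lemma sum_lists_0: "(\<Sum>h\<in>{h. length h = 0}. f h) = f []"
proof -
  have "{h. length h = 0} = {[]}" by auto
  thus ?thesis by simp
qed

lemma sum_triple: "(\<Sum>t\<in>(UNIV :: ('x::finite \<times> 'y::finite \<times> 'z::finite) set). f t) = (\<Sum>x\<in>UNIV. \<Sum>y\<in>UNIV. \<Sum>z\<in>UNIV. f (x,y,z))"
  by (simp add: UNIV_Times_UNIV[symmetric] sum.cartesian_product del: UNIV_Times_UNIV)

locale sm = prob_space M for M :: "'w measure" +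
  fixes X :: "nat \<Rightarrow> 'w \<Rightarrow> 'x::finite"
    and Y :: "nat \<Rightarrow> 'w \<Rightarrow> 'y::finite"
    and Z :: "nat \<Rightarrow> 'w \<Rightarrow> 'z::finite"
    and \<pi> :: "'z \<Rightarrow> real"
    and q :: "'y \<Rightarrow> 'x \<Rightarrow> 'z \<Rightarrow> real"
    and N :: nat
  assumes measX: "\<And>n. n \<in> {1..N} \<Longrightarrow> X n \<in> M \<rightarrow>\<^sub>M count_space UNIV"
    and measY: "\<And>n. n \<in> {1..N} \<Longrightarrow> Y n \<in> M \<rightarrow>\<^sub>M count_space UNIV"
    and measZ: "\<And>n. n \<in> {1..N} \<Longrightarrow> Z n \<in> M \<rightarrow>\<^sub>M count_space UNIV"
    and pi_nonneg: "\<And>z. \<pi> z \<ge> 0" and pi_sum: "(\<Sum>z\<in>UNIV. \<pi> z) = 1"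
    and q_nonneg: "\<And>y' x z. q y' x z \<ge> 0"
    and q_sum: "\<And>x z. (\<Sum>y'\<in>UNIV. q y' x z) = 1"
    and condZ: "\<And>n hs z. n \<in> {1..N} \<Longrightarrow>
        measure M {\<omega> \<in> space M. map (\<lambda>i. (X i \<omega>, Y i \<omega>, Z i \<omega>)) [1..<n] = hs \<and> Z n \<omega> = z}
        = \<pi> z * measure M {\<omega> \<in> space M. map (\<lambda>i. (X i \<omega>, Y i \<omega>, Z i \<omega>)) [1..<n] = hs}"
    and condY: "\<And>n hs z x y'. n \<in> {1..N} \<Longrightarrow>
        measure M {\<omega> \<in> space M. map (\<lambda>i. (X i \<omega>, Y i \<omega>, Z i \<omega>)) [1..<n] = hs
                                  \<and> Z n \<omega> = z \<and> X n \<omega> = x \<and> Y n \<omega> = y'}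
        = q y' x z * measure M {\<omega> \<in> space M. map (\<lambda>i. (X i \<omega>, Y i \<omega>, Z i \<omega>)) [1..<n] = hs
                                  \<and> Z n \<omega> = z \<and> X n \<omega> = x}"
begin

definition hist :: "nat \<Rightarrow> 'w \<Rightarrow> ('x \<times> 'y \<times> 'z) list" where
  "hist n \<omega> = trL (\<lambda>i. X i \<omega>) (\<lambda>i. Y i \<omega>) (\<lambda>i. Z i \<omega>) n"

lemma hist_Suc: "hist (Suc n) \<omega> = hist n \<omega> @ [(X (Suc n) \<omega>, Y (Suc n) \<omega>, Z (Suc n) \<omega>)]"
  by (simp add: hist_def trL_Suc)

lemma length_hist[simp]: "length (hist n \<omega>) = n" by (simp add: hist_def)

lemma hist_map: "hist n \<omega> = map (\<lambda>i. (X i \<omega>, Y i \<omega>, Z i \<omega>)) [1..<Suc n]"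
  by (simp add: hist_def trL_def)

definition Pr :: "('x \<times> 'y \<times> 'z) list \<Rightarrow> real" where
  "Pr h = measure M {\<omega> \<in> space M. hist (length h) \<omega> = h}"

definition R :: "('x \<times> 'y \<times> 'z) list \<Rightarrow> 'z \<Rightarrow> 'x \<Rightarrow> real" where
  "R h z x = measure M {\<omega> \<in> space M. hist (length h) \<omega> = h \<and> Z (Suc (length h)) \<omega> = z \<and> X (Suc (length h)) \<omega> = x}"

lemma Pr_nonneg: "Pr h \<ge> 0" by (simp add: Pr_def)
lemma R_nonneg: "R h z x \<ge> 0" by (simp add: R_def)

lemma setX: "i \<in> {1..N} \<Longrightarrow> {\<omega> \<in> space M. X i \<omega> = a} \<in> sets M"
proof -
  assume i: "i \<in> {1..N}"
  have "X i -` {a} \<inter> space M \<in> sets M" using measurable_sets[OF measX[OF i]] by simp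
  moreover have "{\<omega> \<in> space M. X i \<omega> = a} = X i -` {a} \<inter> space M" by auto
  ultimately show ?thesis by simp
qed

lemma setY: "i \<in> {1..N} \<Longrightarrow> {\<omega> \<in> space M. Y i \<omega> = a} \<in> sets M"
proof -
  assume i: "i \<in> {1..N}"
  have "Y i -` {a} \<inter> space M \<in> sets M" using measurable_sets[OF measY[OF i]] by simp
  moreover have "{\<omega> \<in> space M. Y i \<omega> = a} = Y i -` {a} \<inter> space M" by auto
  ultimately show ?thesis by simp
qed

lemma setZ: "i \<in> {1..N} \<Longrightarrow> {\<omega> \<in> space M. Z i \<omega> = a} \<in> sets M"
proof -
  assume i: "i \<in> {1..N}"
  have "Z i -` {a} \<inter> space M \<in> sets M" using measurable_sets[OF measZ[OF i]] by simp
  moreover have "{\<omega> \<in> space M. Z i \<omega> = a} = Z i -` {a} \<inter> space M" by auto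
  ultimately show ?thesis by simp
qed

lemma hist_meas: "n \<le> N \<Longrightarrow> {\<omega> \<in> space M. hist n \<omega> = h} \<in> sets M"
proof (induction n arbitrary: h)
  case 0
  show ?case by (cases "h = []") (auto simp: hist_def)
next
  case (Suc n)
  show ?case
  proof (cases h rule: rev_exhaust)
    case Nil thus ?thesis by (simp add: hist_Suc)
  next
    case (snoc h' t)
    obtain a b c where t: "t = (a,b,c)" by (cases t) auto
    have "{\<omega> \<in> space M. hist (Suc n) \<omega> = h} =
      {\<omega> \<in> space M. hist n \<omega> = h'} \<inter> {\<omega> \<in> space M. X (Suc n) \<omega> = a}
       \<inter> {\<omega> \<in> space M. Y (Suc n) \<omega> = b} \<inter> {\<omega> \<in> space M. Z (Suc n) \<omega> = c}"
      by (auto simp: hist_Suc snoc t)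
    moreover have "Suc n \<in> {1..N}" using Suc.prems by simp
    ultimately show ?thesis using Suc.IH[of h'] Suc.prems setX setY setZ by simp
  qed
qed

lemma hist_in_meas: "n \<le> N \<Longrightarrow> {\<omega> \<in> space M. hist n \<omega> \<in> E} \<in> sets M"
proof -
  assume n: "n \<le> N"
  have "{\<omega> \<in> space M. hist n \<omega> \<in> E} = (\<Union>h\<in>E \<inter> {h. length h = n}. {\<omega> \<in> space M. hist n \<omega> = h})"
    by auto
  thus ?thesis using hist_meas[OF n] finite_len by (auto intro!: sets.finite_UN)
qed

lemma measure_hist_in:
  assumes "n \<le> N" "E \<subseteq> {h. length h = n}"
  shows "measure M {\<omega> \<in> space M. hist n \<omega> \<in> E} = (\<Sum>h\<in>E. Pr h)"
proof -
  have fin: "finite E" using assms(2) finite_len finite_subset by blast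
  have "{\<omega> \<in> space M. hist n \<omega> \<in> E} = (\<Union>h\<in>E. {\<omega> \<in> space M. hist n \<omega> = h})"
    by auto
  also have "measure M \<dots> = (\<Sum>h\<in>E. measure M {\<omega> \<in> space M. hist n \<omega> = h})"
    using fin hist_meas[OF assms(1)]
    by (intro finite_measure_finite_Union) (auto simp: disjoint_family_on_def)
  also have "\<dots> = (\<Sum>h\<in>E. Pr h)"
    using assms(2) by (intro sum.cong) (auto simp: Pr_def)
  finally show ?thesis .
qed

lemma Pr_Nil: "Pr [] = 1"
proof -
  have "{\<omega> \<in> space M. hist (length []) \<omega> = []} = space M" by (auto simp: hist_def)
  thus ?thesis by (simp add: Pr_def prob_space)
qed

lemma Pr_snoc:
  assumes "length h < N"
  shows "Pr (h @ [(x,y,z)]) = q y x z * R h z x"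
proof -
  have n: "Suc (length h) \<in> {1..N}" using assms by simp
  have "{\<omega> \<in> space M. hist (length (h @ [(x,y,z)])) \<omega> = h @ [(x,y,z)]} =
        {\<omega> \<in> space M. map (\<lambda>i. (X i \<omega>, Y i \<omega>, Z i \<omega>)) [1..<Suc (length h)] = h
                                  \<and> Z (Suc (length h)) \<omega> = z \<and> X (Suc (length h)) \<omega> = x \<and> Y (Suc (length h)) \<omega> = y}"
    by (auto simp: hist_Suc hist_map)
  moreover have "{\<omega> \<in> space M. hist (length h) \<omega> = h \<and> Z (Suc (length h)) \<omega> = z \<and> X (Suc (length h)) \<omega> = x} =
     {\<omega> \<in> space M. map (\<lambda>i. (X i \<omega>, Y i \<omega>, Z i \<omega>)) [1..<Suc (length h)] = h
                                  \<and> Z (Suc (length h)) \<omega> = z \<and> X (Suc (length h)) \<omega> = x}"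
    by (simp add: hist_map)
  ultimately show ?thesis
    unfolding Pr_def R_def using condY[OF n] by simp
qed

lemma R_sum:
  assumes "length h < N"
  shows "(\<Sum>x\<in>UNIV. R h z x) = \<pi> z * Pr h"
proof -
  have n: "Suc (length h) \<in> {1..N}" using assms by simp
  let ?A = "\<lambda>x. {\<omega> \<in> space M. hist (length h) \<omega> = h \<and> Z (Suc (length h)) \<omega> = z \<and> X (Suc (length h)) \<omega> = x}"
  have meas: "?A x \<in> sets M" for x
  proof -
    have "?A x = {\<omega> \<in> space M. hist (length h) \<omega> = h} \<inter> {\<omega> \<in> space M. Z (Suc (length h)) \<omega> = z}
                 \<inter> {\<omega> \<in> space M. X (Suc (length h)) \<omega> = x}" by auto
    thus ?thesis using hist_meas[of "length h" h] assms setX[OF n] setZ[OF n] by simp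
  qed
  have "(\<Sum>x\<in>UNIV. R h z x) = measure M (\<Union>x. ?A x)"
    unfolding R_def using meas
    by (intro finite_measure_finite_Union[symmetric]) (auto simp: disjoint_family_on_def)
  also have "(\<Union>x. ?A x) = {\<omega> \<in> space M. map (\<lambda>i. (X i \<omega>, Y i \<omega>, Z i \<omega>)) [1..<Suc (length h)] = h \<and> Z (Suc (length h)) \<omega> = z}"
    by (auto simp: hist_map)
  also have "measure M \<dots> = \<pi> z * Pr h"
    unfolding condZ[OF n] Pr_def by (simp add: hist_map)
  finally show ?thesis .
qed

lemma Pr_sum_xy:
  assumes "length h < N"
  shows "(\<Sum>x\<in>UNIV. \<Sum>y\<in>UNIV. Pr (h @ [(x,y,z)])) = \<pi> z * Pr h"
proof -
  have "(\<Sum>x\<in>UNIV. \<Sum>y\<in>UNIV. Pr (h @ [(x,y,z)])) = (\<Sum>x\<in>UNIV. (\<Sum>y\<in>UNIV. q y x z) * R h z x)"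
    using assms by (simp add: Pr_snoc sum_distrib_right)
  also have "\<dots> = \<pi> z * Pr h" using q_sum R_sum[OF assms] by simp
  finally show ?thesis .
qed

lemma supermart:
  assumes step: "\<And>h. length h < N \<Longrightarrow> (\<Sum>t\<in>UNIV. Pr (h @ [t]) * F (h @ [t])) \<le> Pr h * F h"
  shows "n \<le> N \<Longrightarrow> (\<Sum>h\<in>{h. length h = n}. Pr h * F h) \<le> F []"
proof (induction n)
  case 0 thus ?case by (simp add: sum_lists_0 Pr_Nil)
next
  case (Suc n)
  have "(\<Sum>h\<in>{h. length h = Suc n}. Pr h * F h) = (\<Sum>h\<in>{h. length h = n}. \<Sum>t\<in>UNIV. Pr (h @ [t]) * F (h @ [t]))"
    by (rule sum_lists_Suc)
  also have "\<dots> \<le> (\<Sum>h\<in>{h. length h = n}. Pr h * F h)"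
    using Suc.prems by (intro sum_mono step) auto
  also have "\<dots> \<le> F []" using Suc by simp
  finally show ?case .
qed

end


lemma bern_sum:
  fixes w :: "'a::finite \<Rightarrow> real"
  assumes nn: "\<And>a. w a \<ge> 0" and s1: "(\<Sum>a\<in>UNIV. w a) = 1"
  shows "(\<Sum>a\<in>UNIV. w a * exp (lam * ((if a = a0 then 1 else 0) - w a0) - lam\<^sup>2 / 8)) \<le> 1"
proof -
  let ?p = "w a0"
  have rest: "(\<Sum>a\<in>UNIV - {a0}. w a) = 1 - ?p"
    using s1 sum.remove[of UNIV a0 w] by simp
  have p1: "?p \<le> 1" using rest nn by (metis diff_ge_0_iff_ge sum_nonneg)
  have "(\<Sum>a\<in>UNIV. w a * exp (lam * ((if a = a0 then 1 else 0) - ?p) - lam\<^sup>2 / 8))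
     = ?p * exp (lam * (1 - ?p) - lam\<^sup>2 / 8) + (\<Sum>a\<in>UNIV - {a0}. w a * exp (lam * ((if a = a0 then 1 else 0) - ?p) - lam\<^sup>2 / 8))"
    by (subst sum.remove[of UNIV a0]) auto
  also have "(\<Sum>a\<in>UNIV - {a0}. w a * exp (lam * ((if a = a0 then 1 else 0) - ?p) - lam\<^sup>2 / 8))
     = (\<Sum>a\<in>UNIV - {a0}. w a) * exp (- lam * ?p - lam\<^sup>2 / 8)"
    by (simp add: sum_distrib_right)
  also have "?p * exp (lam * (1 - ?p) - lam\<^sup>2 / 8) + (\<Sum>a\<in>UNIV - {a0}. w a) * exp (- lam * ?p - lam\<^sup>2 / 8)
     = exp (- (lam\<^sup>2 / 8)) * (?p * exp (lam * (1 - ?p)) + (1 - ?p) * exp (- lam * ?p))"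
  proof -
    have a: "exp (lam * (1 - ?p) - lam\<^sup>2 / 8) = exp (- (lam\<^sup>2 / 8)) * exp (lam * (1 - ?p))"
      by (simp add: exp_add[symmetric])
    have b: "exp (- lam * ?p - lam\<^sup>2 / 8) = exp (- (lam\<^sup>2 / 8)) * exp (- lam * ?p)"
      by (simp add: exp_add[symmetric])
    show ?thesis unfolding rest a b by (simp add: algebra_simps)
  qed
  also have "\<dots> \<le> exp (- (lam\<^sup>2 / 8)) * exp (lam\<^sup>2 / 8)"
    using bern_hoeff[of ?p lam] nn p1 by (intro mult_left_mono) auto
  also have "\<dots> = 1" by (simp add: exp_minus)
  finally show ?thesis .
qed

context sm begin

lemma tail:
  fixes d c :: "('x \<times> 'y \<times> 'z) list \<Rightarrow> ('x \<times> 'y \<times> 'z) \<Rightarrow> real" and lam r :: real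
  assumes step: "\<And>h. length h < N \<Longrightarrow> (\<Sum>t\<in>UNIV. Pr (h @ [t]) * exp (lam * d h t - lam\<^sup>2 * c h t / 8)) \<le> Pr h"
    and E: "E \<subseteq> {h. length h = N}"
    and bnd: "\<And>h. h \<in> E \<Longrightarrow> lam * acc d h - lam\<^sup>2 * acc c h / 8 \<ge> r"
  shows "(\<Sum>h\<in>E. Pr h) \<le> exp (- r)"
proof -
  define F where "F h = exp (lam * acc d h - lam\<^sup>2 * acc c h / 8)" for h
  have Fsnoc: "F (h @ [t]) = F h * exp (lam * d h t - lam\<^sup>2 * c h t / 8)" for h t
    unfolding F_def acc_snoc by (simp add: exp_add[symmetric] algebra_simps add_divide_distrib)
  have st: "(\<Sum>t\<in>UNIV. Pr (h @ [t]) * F (h @ [t])) \<le> Pr h * F h" if "length h < N" for h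
  proof -
    have "(\<Sum>t\<in>UNIV. Pr (h @ [t]) * F (h @ [t])) = F h * (\<Sum>t\<in>UNIV. Pr (h @ [t]) * exp (lam * d h t - lam\<^sup>2 * c h t / 8))"
      by (simp add: Fsnoc sum_distrib_left algebra_simps)
    also have "\<dots> \<le> F h * Pr h"
      using step[OF that] by (intro mult_left_mono) (auto simp: F_def)
    finally show ?thesis by (simp add: algebra_simps)
  qed
  have tot: "(\<Sum>h\<in>{h. length h = N}. Pr h * F h) \<le> 1"
    using supermart[of F N, OF st] by (simp add: F_def)
  have fin: "finite {h :: ('x \<times> 'y \<times> 'z) list. length h = N}" by (rule finite_len)
  have "(\<Sum>h\<in>E. Pr h) \<le> (\<Sum>h\<in>E. Pr h * F h * exp (- r))"
  proof (rule sum_mono)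
    fix h assume h: "h \<in> E"
    have "exp r \<le> F h" unfolding F_def using bnd[OF h] by simp
    hence "1 \<le> F h * exp (- r)" by (simp add: exp_minus field_simps)
    thus "Pr h \<le> Pr h * F h * exp (- r)"
      using Pr_nonneg[of h] mult_left_mono[of 1 "F h * exp (- r)" "Pr h"] by (simp add: algebra_simps)
  qed
  also have "\<dots> = exp (- r) * (\<Sum>h\<in>E. Pr h * F h)" by (simp add: sum_distrib_left algebra_simps)
  also have "\<dots> \<le> exp (- r) * (\<Sum>h\<in>{h. length h = N}. Pr h * F h)"
    using E fin by (intro mult_left_mono sum_mono2) (auto intro!: mult_nonneg_nonneg Pr_nonneg simp: F_def)
  also have "\<dots> \<le> exp (- r) * 1" using tot by (intro mult_left_mono) auto
  finally show ?thesis by simp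
qed

lemma sum_triple_zxy: "(\<Sum>t\<in>(UNIV :: ('x \<times> 'y \<times> 'z) set). f t) = (\<Sum>z\<in>UNIV. \<Sum>x\<in>UNIV. \<Sum>y\<in>UNIV. f (x,y,z))"
proof -
  have "(\<Sum>t\<in>(UNIV :: ('x \<times> 'y \<times> 'z) set). f t) = (\<Sum>x\<in>UNIV. \<Sum>y\<in>UNIV. \<Sum>z\<in>UNIV. f (x,y,z))"
    by (rule sum_triple)
  also have "\<dots> = (\<Sum>x\<in>UNIV. \<Sum>z\<in>UNIV. \<Sum>y\<in>UNIV. f (x,y,z))"
    by (rule sum.cong[OF refl], rule sum.swap)
  also have "\<dots> = (\<Sum>z\<in>UNIV. \<Sum>x\<in>UNIV. \<Sum>y\<in>UNIV. f (x,y,z))"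
    by (rule sum.swap)
  finally show ?thesis .
qed

lemma stepA:
  assumes "length h < N"
  shows "(\<Sum>t\<in>UNIV. Pr (h @ [t]) * exp (lam * dA z0 (\<pi> z0) h t - lam\<^sup>2 * (\<lambda>h t. 1) h t / 8)) \<le> Pr h"
proof -
  define e where "e z = exp (lam * ((if z = z0 then 1 else 0) - \<pi> z0) - lam\<^sup>2 / 8)" for z
  have "(\<Sum>t\<in>UNIV. Pr (h @ [t]) * exp (lam * dA z0 (\<pi> z0) h t - lam\<^sup>2 * (\<lambda>h t. 1) h t / 8))
      = (\<Sum>z\<in>UNIV. \<Sum>x\<in>UNIV. \<Sum>y\<in>UNIV. Pr (h @ [(x,y,z)]) * e z)"
    unfolding sum_triple_zxy by (simp add: dA_def e_def)
  also have "\<dots> = (\<Sum>z\<in>UNIV. e z * (\<Sum>x\<in>UNIV. \<Sum>y\<in>UNIV. Pr (h @ [(x,y,z)])))"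
    by (simp add: sum_distrib_left sum_distrib_right algebra_simps)
  also have "\<dots> = Pr h * (\<Sum>z\<in>UNIV. \<pi> z * e z)"
    using Pr_sum_xy[OF assms] by (simp add: sum_distrib_left algebra_simps)
  also have "\<dots> \<le> Pr h * 1"
    using bern_sum[of \<pi> lam z0] pi_nonneg pi_sum Pr_nonneg[of h]
    by (intro mult_left_mono) (auto simp: e_def)
  finally show ?thesis by simp
qed

lemma stepB:
  assumes "length h < N"
  shows "(\<Sum>t\<in>UNIV. Pr (h @ [t]) * exp (lam * dB xt y0 z0 K (q y0 xt z0) h t - lam\<^sup>2 * cB xt z0 K h t / 8)) \<le> Pr h"
proof -
  define e where "e t = exp (lam * dB xt y0 z0 K (q y0 xt z0) h t - lam\<^sup>2 * cB xt z0 K h t / 8)" for t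
  have inner: "(\<Sum>y\<in>UNIV. q y x z * e (x,y,z)) \<le> 1" for x z
  proof (cases "selB xt z0 K h (x, undefined, z)")
    case True
    hence xz: "x = xt" "z = z0" and sel: "\<And>y. selB xt z0 K h (x,y,z)" by (auto simp: selB_def)
    have "(\<Sum>y\<in>UNIV. q y x z * e (x,y,z)) =
       (\<Sum>y\<in>UNIV. q y xt z0 * exp (lam * ((if y = y0 then 1 else 0) - q y0 xt z0) - lam\<^sup>2 / 8))"
      using sel xz by (intro sum.cong) (auto simp: e_def dB_def cB_def)
    also have "\<dots> \<le> 1" using bern_sum[of "\<lambda>y. q y xt z0"] q_nonneg q_sum by blast
    finally show ?thesis .
  next
    case False
    hence "\<And>y. \<not> selB xt z0 K h (x,y,z)" by (auto simp: selB_def)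
    hence "(\<Sum>y\<in>UNIV. q y x z * e (x,y,z)) = (\<Sum>y\<in>UNIV. q y x z)"
      by (intro sum.cong) (auto simp: e_def dB_def cB_def)
    thus ?thesis using q_sum by simp
  qed
  have "(\<Sum>t\<in>UNIV. Pr (h @ [t]) * e t) = (\<Sum>z\<in>UNIV. \<Sum>x\<in>UNIV. \<Sum>y\<in>UNIV. Pr (h @ [(x,y,z)]) * e (x,y,z))"
    unfolding sum_triple_zxy by simp
  also have "\<dots> = (\<Sum>z\<in>UNIV. \<Sum>x\<in>UNIV. R h z x * (\<Sum>y\<in>UNIV. q y x z * e (x,y,z)))"
    using assms by (simp add: Pr_snoc sum_distrib_left algebra_simps)
  also have "\<dots> \<le> (\<Sum>z\<in>UNIV. \<Sum>x\<in>UNIV. R h z x * 1)"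
    using inner R_nonneg by (intro sum_mono mult_left_mono) auto
  also have "\<dots> = (\<Sum>z\<in>UNIV. \<pi> z * Pr h)" using R_sum[OF assms] by simp
  also have "\<dots> = Pr h" using pi_sum by (simp add: sum_distrib_right[symmetric])
  finally show ?thesis by (simp add: e_def)
qed

end


lemma pow2floor_ex:
  assumes "n \<ge> 2"
  shows "\<exists>K. 1 \<le> K \<and> pow2floor n = 2 ^ K \<and> 2 ^ K \<le> n"
proof -
  let ?P = "\<lambda>k. 1 \<le> k \<and> (2::nat) ^ k \<le> n"
  have P1: "?P 1" using assms by simp
  have bnd: "\<And>k. ?P k \<Longrightarrow> k \<le> n"
    by (metis dual_order.trans less_exp less_imp_le_nat)
  have "?P (Greatest ?P)" using GreatestI_nat[of ?P 1 n] P1 bnd by blast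
  moreover have "pow2floor n = 2 ^ (Greatest ?P)" using assms by (simp add: pow2floor_def)
  ultimately show ?thesis by blast
qed

lemma invsq_aux:
  assumes "n \<ge> 3"
  shows "(\<Sum>k=1..n. 1 / (real k)\<^sup>2) \<le> 1.65 - 2 / (2 * real n + 1)"
  using assms
proof (induction n rule: nat_induct_at_least)
  case base
  show ?case by (simp add: numeral_eq_Suc)
next
  case (Suc n)
  have "1 / (real (Suc n))\<^sup>2 \<le> 2 / (2 * real n + 1) - 2 / (2 * real (Suc n) + 1)"
  proof -
    have "2 / (2 * real n + 1) - 2 / (2 * real (Suc n) + 1) = 4 / ((2 * real n + 1) * (2 * real n + 3))"
      by (simp add: field_simps)
    moreover have "1 / (real (Suc n))\<^sup>2 \<le> 4 / ((2 * real n + 1) * (2 * real n + 3))"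
    proof -
      have le: "(2 * real n + 1) * (2 * real n + 3) \<le> 4 * (real (Suc n))\<^sup>2"
        by (simp add: power2_eq_square algebra_simps)
      have "1 / (real (Suc n))\<^sup>2 = 4 / (4 * (real (Suc n))\<^sup>2)" by simp
      also have "\<dots> \<le> 4 / ((2 * real n + 1) * (2 * real n + 3))"
        using le by (intro divide_left_mono) auto
      finally show ?thesis .
    qed
    ultimately show ?thesis by simp
  qed
  thus ?case using Suc.IH by (simp add: sum.cl_ivl_Suc)
qed

lemma invsq: "(\<Sum>k=1..n. 1 / (real k)\<^sup>2) \<le> 1.65"
proof (cases "n \<ge> 3")
  case True
  have "2 / (2 * real n + 1) \<ge> 0" by simp
  thus ?thesis using invsq_aux[OF True] by linarith
next
  case False
  hence "n = 0 \<or> n = 1 \<or> n = 2" by auto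
  thus ?thesis by (auto simp: numeral_eq_Suc)
qed

lemma in_ci_cong:
  assumes ag: "\<forall>n\<in>{1..N}. xs n = xs' n \<and> ys n = ys' n \<and> zs n = zs' n"
  shows "in_ci xs ys zs N \<delta> y x p = in_ci xs' ys' zs' N \<delta> y x p"
proof -
  have c: "cnt xs zs m x' z = cnt xs' zs' m x' z" if "m \<le> N" for m x' z
    unfolding cnt_def using ag that by (intro arg_cong[where f=card]) auto
  have ph: "phat zs N = phat zs' N"
    unfolding phat_def using ag by (intro ext arg_cong[where f=card] arg_cong2[where f="(/)"] refl arg_cong[where f=real]) auto
  have pc: "pcheck xs ys zs N y x' z = pcheck xs' ys' zs' N y x' z" for x' z
    unfolding pcheck_def c[OF order_refl]
    using ag c by (intro arg_cong2[where f="(/)"] refl arg_cong[where f=real] arg_cong[where f=card]) auto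
  show ?thesis
    unfolding in_ci_def m_est_def h_est_def ph pc c[OF order_refl] ..
qed

definition tA :: "nat \<Rightarrow> nat \<Rightarrow> real \<Rightarrow> real" where
  "tA c N \<delta> = sqrt (ln (4 * real c / \<delta>) / (2 * real N))"
definition tB :: "nat \<Rightarrow> real \<Rightarrow> nat \<Rightarrow> real" where
  "tB c \<delta> k = sqrt ((2 * ln (real k) + ln (6.6 * real c / \<delta>)) / (2 * real ((2::nat) ^ k)))"
definition rA :: "nat \<Rightarrow> real \<Rightarrow> real" where
  "rA c \<delta> = ln (4 * real c / \<delta>)"
definition rB :: "nat \<Rightarrow> real \<Rightarrow> nat \<Rightarrow> real" where
  "rB c \<delta> k = 2 * ln (real k) + ln (6.6 * real c / \<delta>)"
definition sg :: "bool \<Rightarrow> real" where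
  "sg s = (if s then 4 else -4)"

definition EA :: "('z \<Rightarrow> real) \<Rightarrow> nat \<Rightarrow> nat \<Rightarrow> real \<Rightarrow> bool \<Rightarrow> 'z \<Rightarrow> ('x \<times> 'y \<times> 'z) list set" where
  "EA \<pi> N c \<delta> s z = {h. length h = N \<and>
     sg s * tA c N \<delta> * acc (dA z (\<pi> z)) h - (sg s * tA c N \<delta>)\<^sup>2 * acc (\<lambda>h t. 1) h / 8 \<ge> rA c \<delta>}"

definition EB :: "('y \<Rightarrow> 'x \<Rightarrow> 'z \<Rightarrow> real) \<Rightarrow> 'x \<Rightarrow> 'y \<Rightarrow> nat \<Rightarrow> nat \<Rightarrow> real \<Rightarrow> bool \<Rightarrow> 'z \<Rightarrow> nat \<Rightarrow> ('x \<times> 'y \<times> 'z) list set" where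
  "EB q xt y0 N c \<delta> s z k = {h. length h = N \<and>
     sg s * tB c \<delta> k * acc (dB xt y0 z (2^k) (q y0 xt z)) h - (sg s * tB c \<delta> k)\<^sup>2 * acc (cB xt z (2^k)) h / 8 \<ge> rB c \<delta> k}"

lemma gl:
  fixes c t D r :: real
  assumes "c > 0" "t \<ge> 0" "r = 2 * c * t\<^sup>2" "\<bar>D\<bar> > c * t"
  shows "\<exists>s. sg s * t * D - (sg s * t)\<^sup>2 * c / 8 \<ge> r"
proof (cases "D > c * t")
  case True
  have "4 * t * D \<ge> 4 * t * (c * t)" using True assms by (intro mult_left_mono) auto
  hence "sg True * t * D - (sg True * t)\<^sup>2 * c / 8 \<ge> r"
    using assms by (simp add: sg_def power2_eq_square algebra_simps)
  thus ?thesis by blast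
next
  case False
  hence D: "D < - (c * t)" using assms by linarith
  have "4 * t * (-D) \<ge> 4 * t * (c * t)" using D assms by (intro mult_left_mono) auto
  hence "sg False * t * D - (sg False * t)\<^sup>2 * c / 8 \<ge> r"
    using assms by (simp add: sg_def power2_eq_square algebra_simps)
  thus ?thesis by blast
qed

lemma analytic:
  fixes a b p qq t :: "'z::finite \<Rightarrow> real" and t0 :: real
  assumes "\<And>z. 0 \<le> a z" "\<And>z. a z \<le> 1" "\<And>z. 0 \<le> qq z" "\<And>z. qq z \<le> 1"
    "\<And>z. \<bar>a z - p z\<bar> \<le> t0" "\<And>z. \<bar>b z - qq z\<bar> \<le> t z"
  shows "\<bar>(\<Sum>z\<in>UNIV. a z * b z) - (\<Sum>z\<in>UNIV. qq z * p z)\<bar> \<le> real CARD('z) * t0 + (\<Sum>z\<in>UNIV. t z)"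
proof -
  have each: "\<bar>a z * b z - qq z * p z\<bar> \<le> t z + t0" for z
  proof -
    have e: "a z * b z - qq z * p z = a z * (b z - qq z) + qq z * (a z - p z)" by (simp add: algebra_simps)
    have "\<bar>a z * (b z - qq z)\<bar> \<le> 1 * t z"
      unfolding abs_mult using assms by (intro mult_mono) auto
    moreover have "\<bar>qq z * (a z - p z)\<bar> \<le> 1 * t0"
      unfolding abs_mult using assms by (intro mult_mono) auto
    ultimately show ?thesis unfolding e by linarith
  qed
  have "\<bar>(\<Sum>z\<in>UNIV. a z * b z) - (\<Sum>z\<in>UNIV. qq z * p z)\<bar> = \<bar>\<Sum>z\<in>UNIV. a z * b z - qq z * p z\<bar>"
    by (simp add: sum_subtractf)
  also have "\<dots> \<le> (\<Sum>z\<in>UNIV. \<bar>a z * b z - qq z * p z\<bar>)" by (rule sum_abs)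
  also have "\<dots> \<le> (\<Sum>z\<in>UNIV. t z + t0)" by (intro sum_mono each)
  also have "\<dots> = real CARD('z) * t0 + (\<Sum>z\<in>UNIV. t z)" by (simp add: sum.distrib)
  finally show ?thesis .
qed



lemma cover:
  fixes xs :: "nat \<Rightarrow> 'x::finite" and ys :: "nat \<Rightarrow> 'y::finite" and zs :: "nat \<Rightarrow> 'z::finite"
    and \<pi> :: "'z \<Rightarrow> real" and q :: "'y \<Rightarrow> 'x \<Rightarrow> 'z \<Rightarrow> real"
  assumes N: "N \<ge> 1" and d0: "0 < \<delta>" and d1: "\<delta> < 1"
    and q0: "\<And>z. 0 \<le> q y0 xt z" and q1: "\<And>z. q y0 xt z \<le> 1"
    and nc: "\<not> in_ci xs ys zs N \<delta> y0 xt (\<Sum>z\<in>UNIV. q y0 xt z * \<pi> z)"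
  shows "(\<exists>s z. trL xs ys zs N \<in> EA \<pi> N CARD('z) \<delta> s z) \<or>
         (\<exists>s z k. k \<in> {1..N} \<and> trL xs ys zs N \<in> EB q xt y0 N CARD('z) \<delta> s z k)"
proof (rule ccontr)
  define h where "h = trL xs ys zs N"
  define C where "C = CARD('z)"
  assume "\<not> ?thesis"
  hence nA: "\<And>s z. h \<notin> EA \<pi> N C \<delta> s z" and nB: "\<And>s z k. k \<in> {1..N} \<Longrightarrow> h \<notin> EB q xt y0 N C \<delta> s z k"
    unfolding h_def C_def by auto
  from nc have c2: "\<And>z. cnt xs zs N xt z \<ge> 2"
    and nint: "\<not> (m_est xs ys zs N y0 xt - h_est xs zs N \<delta> xt \<le> (\<Sum>z\<in>UNIV. q y0 xt z * \<pi> z)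
                 \<and> (\<Sum>z\<in>UNIV. q y0 xt z * \<pi> z) \<le> m_est xs ys zs N y0 xt + h_est xs zs N \<delta> xt)"
    unfolding in_ci_def by (auto simp: not_less)
  have "\<forall>z. \<exists>K. 1 \<le> K \<and> pow2floor (cnt xs zs N xt z) = 2 ^ K \<and> 2 ^ K \<le> cnt xs zs N xt z"
    using pow2floor_ex c2 by blast
  then obtain K where K1: "\<And>z. 1 \<le> K z" and Kp: "\<And>z. pow2floor (cnt xs zs N xt z) = 2 ^ K z"
    and Kc: "\<And>z. 2 ^ K z \<le> cnt xs zs N xt z" by metis
  have KN: "K z \<in> {1..N}" for z
  proof -
    have "K z < 2 ^ K z" by simp
    also have "\<dots> \<le> N" using Kc[of z] cnt_le[of xs zs N xt z] by linarith
    finally show ?thesis using K1[of z] by simp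
  qed
  have C1: "real C \<ge> 1" unfolding C_def by simp
  have Npos: "real N > 0" using N by simp
  have rA_nn: "rA C \<delta> \<ge> 0"
  proof -
    have "4 * real C / \<delta> \<ge> 1" using C1 d0 d1 by (simp add: field_simps)
    thus ?thesis unfolding rA_def by simp
  qed
  have tA_nn: "tA C N \<delta> \<ge> 0" unfolding tA_def using rA_nn Npos by (simp add: rA_def)
  have tA_sq: "rA C \<delta> = 2 * real N * (tA C N \<delta>)\<^sup>2"
    unfolding tA_def using rA_nn Npos by (simp add: rA_def)
  have ln66: "ln (6.6 * real C / \<delta>) \<ge> 0"
  proof -
    have "6.6 * real C / \<delta> \<ge> 1" using C1 d0 d1 by (simp add: field_simps)
    thus ?thesis by simp
  qed
  have rB_nn: "rB C \<delta> k \<ge> 0" if "k \<ge> 1" for k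
    unfolding rB_def using ln66 that by simp
  have tB_nn: "tB C \<delta> k \<ge> 0" if "k \<ge> 1" for k
    unfolding tB_def using rB_nn[OF that] by (simp add: rB_def)
  have tB_sq: "rB C \<delta> k = 2 * real ((2::nat) ^ k) * (tB C \<delta> k)\<^sup>2" if "k \<ge> 1" for k
    unfolding tB_def using rB_nn[OF that] by (simp add: rB_def)
  have cardN: "card {n \<in> {1..N}. zs n = z} \<le> N" for z
  proof -
    have "card {n \<in> {1..N}. zs n = z} \<le> card {1..N}" by (rule card_mono) auto
    thus ?thesis by simp
  qed
  have A: "\<bar>phat zs N z - \<pi> z\<bar> \<le> tA C N \<delta>" for z
  proof (rule ccontr)
    assume a: "\<not> ?thesis"
    define D where "D = acc (dA z (\<pi> z)) h"
    have D: "D = real N * (phat zs N z - \<pi> z)"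
      unfolding D_def h_def acc_dA phat_def using Npos by (simp add: field_simps)
    have "\<bar>D\<bar> > real N * tA C N \<delta>"
      unfolding D abs_mult using a Npos by simp
    then obtain s where s: "sg s * tA C N \<delta> * D - (sg s * tA C N \<delta>)\<^sup>2 * real N / 8 \<ge> rA C \<delta>"
      using gl[OF Npos tA_nn, of "rA C \<delta>" D] tA_sq by (auto simp: algebra_simps)
    have "h \<in> EA \<pi> N C \<delta> s z"
      unfolding EA_def using s by (simp add: D_def acc_one h_def)
    thus False using nA by blast
  qed
  have B: "\<bar>pcheck xs ys zs N y0 xt z - q y0 xt z\<bar> \<le> tB C \<delta> (K z)" for z
  proof (rule ccontr)
    assume a: "\<not> ?thesis"
    define D where "D = acc (dB xt y0 z (2 ^ K z) (q y0 xt z)) h"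
    define num where "num = real (card {n \<in> {1..N}. cnt xs zs n xt z \<le> 2 ^ K z \<and> xs n = xt \<and> ys n = y0 \<and> zs n = z})"
    have P2: "real ((2::nat) ^ K z) > 0" by simp
    have mn: "min (cnt xs zs N xt z) (2 ^ K z) = 2 ^ K z" using Kc[of z] by simp
    have D: "D = real ((2::nat) ^ K z) * (pcheck xs ys zs N y0 xt z - q y0 xt z)"
      unfolding D_def h_def acc_dB pcheck_def Kp mn using P2 by (simp add: field_simps)
    have cc: "acc (cB xt z (2 ^ K z)) h = real ((2::nat) ^ K z)"
      unfolding h_def acc_cB mn ..
    have "\<bar>D\<bar> > real ((2::nat) ^ K z) * tB C \<delta> (K z)"
      unfolding D abs_mult using a P2 by simp
    then obtain s where s: "sg s * tB C \<delta> (K z) * D - (sg s * tB C \<delta> (K z))\<^sup>2 * real ((2::nat) ^ K z) / 8 \<ge> rB C \<delta> (K z)"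
      using gl[OF P2 tB_nn[OF K1[of z]], of "rB C \<delta> (K z)" D] tB_sq[OF K1[of z]] by (auto simp: algebra_simps)
    have "h \<in> EB q xt y0 N C \<delta> s z (K z)"
      unfolding EB_def using s cc by (simp add: D_def h_def[symmetric]) (simp add: h_def)
    thus False using nB KN by blast
  qed
  have ph01: "0 \<le> phat zs N z" "phat zs N z \<le> 1" for z
    unfolding phat_def using cardN[of z] Npos by (auto simp: divide_le_eq)
  have an: "\<bar>(\<Sum>z\<in>UNIV. phat zs N z * pcheck xs ys zs N y0 xt z) - (\<Sum>z\<in>UNIV. q y0 xt z * \<pi> z)\<bar>
      \<le> real CARD('z) * tA C N \<delta> + (\<Sum>z\<in>UNIV. tB C \<delta> (K z))"
    by (rule analytic[OF ph01 q0 q1 A B])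
  have lg: "log 2 (real ((2::nat) ^ K z)) = real (K z)" for z
    by simp
  have H: "h_est xs zs N \<delta> xt = real CARD('z) * tA C N \<delta> + (\<Sum>z\<in>UNIV. tB C \<delta> (K z))"
    unfolding h_est_def tA_def tB_def Kp lg C_def ..
  show False using an nint unfolding H m_est_def by linarith
qed



context sm begin

lemma q_le1: "q y' x z \<le> 1"
proof -
  have "q y' x z \<le> (\<Sum>y\<in>UNIV. q y x z)" by (rule member_le_sum) (auto simp: q_nonneg)
  thus ?thesis using q_sum by simp
qed

lemma main:
  assumes N: "N \<ge> 1" and d0: "0 < \<delta>" and d1: "\<delta> < 1"
  shows "measure M {\<omega> \<in> space M. in_ci (\<lambda>n. X n \<omega>) (\<lambda>n. Y n \<omega>) (\<lambda>n. Z n \<omega>) N \<delta> y xt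
                 (\<Sum>z\<in>UNIV. q y xt z * \<pi> z)} \<ge> 1 - \<delta>"
proof -
  define P where "P = (\<Sum>z\<in>UNIV. q y xt z * \<pi> z)"
  define C where "C = CARD('z)"
  define Q where "Q h = in_ci (\<lambda>n. fst (h ! (n - 1))) (\<lambda>n. fst (snd (h ! (n - 1)))) (\<lambda>n. snd (snd (h ! (n - 1)))) N \<delta> y xt P"
    for h :: "('x \<times> 'y \<times> 'z) list"
  define L where "L = {h :: ('x \<times> 'y \<times> 'z) list. length h = N}"
  define G where "G = {h \<in> L. Q h}"
  define Bd where "Bd = {h \<in> L. \<not> Q h}"
  have finL: "finite L" unfolding L_def by (rule finite_len)
  have trL_nth: "trL (\<lambda>n. fst (h ! (n - 1))) (\<lambda>n. fst (snd (h ! (n - 1)))) (\<lambda>n. snd (snd (h ! (n - 1)))) N = h"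
    if "h \<in> L" for h
    using that unfolding trL_def L_def by (intro nth_equalityI) (auto simp del: upt_Suc)
  have good_eq: "{\<omega> \<in> space M. in_ci (\<lambda>n. X n \<omega>) (\<lambda>n. Y n \<omega>) (\<lambda>n. Z n \<omega>) N \<delta> y xt P}
      = {\<omega> \<in> space M. hist N \<omega> \<in> G}"
  proof -
    have "Q (hist N \<omega>) = in_ci (\<lambda>n. X n \<omega>) (\<lambda>n. Y n \<omega>) (\<lambda>n. Z n \<omega>) N \<delta> y xt P" for \<omega>
      unfolding Q_def by (rule in_ci_cong) (auto simp: hist_map nth_map simp del: upt_Suc)
    thus ?thesis unfolding G_def L_def by auto
  qed
  have m_good: "measure M {\<omega> \<in> space M. hist N \<omega> \<in> G} = (\<Sum>h\<in>G. Pr h)"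
    by (rule measure_hist_in) (auto simp: G_def L_def)
  have total: "(\<Sum>h\<in>L. Pr h) = 1"
  proof -
    have "measure M {\<omega> \<in> space M. hist N \<omega> \<in> L} = (\<Sum>h\<in>L. Pr h)"
      by (rule measure_hist_in) (auto simp: L_def)
    moreover have "{\<omega> \<in> space M. hist N \<omega> \<in> L} = space M" by (auto simp: L_def)
    ultimately show ?thesis by (simp add: prob_space)
  qed
  have split: "(\<Sum>h\<in>L. Pr h) = (\<Sum>h\<in>G. Pr h) + (\<Sum>h\<in>Bd. Pr h)"
  proof -
    have "L = G \<union> Bd" "G \<inter> Bd = {}" unfolding G_def Bd_def by auto
    moreover have "finite G" "finite Bd" using finL unfolding G_def Bd_def by auto
    ultimately show ?thesis by (metis sum.union_disjoint)
  qed
  define I where "I = (UNIV :: 'z set) \<times> ({0..N} \<times> (UNIV :: bool set))"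
  define E where "E i = (case i of (z, k, s) \<Rightarrow>
      if k = 0 then EA \<pi> N C \<delta> s z else EB q xt y N C \<delta> s z k)" for i :: "'z \<times> nat \<times> bool"
  have finI: "finite I" unfolding I_def by simp
  have Esub: "E i \<subseteq> L" for i
    unfolding E_def L_def EA_def EB_def by (auto split: prod.splits)
  have cov: "Bd \<subseteq> (\<Union>i\<in>I. E i)"
  proof
    fix h assume h: "h \<in> Bd"
    hence hL: "h \<in> L" and nQ: "\<not> Q h" unfolding Bd_def by auto
    have "(\<exists>s z. trL (\<lambda>n. fst (h ! (n - 1))) (\<lambda>n. fst (snd (h ! (n - 1)))) (\<lambda>n. snd (snd (h ! (n - 1)))) N
                \<in> EA \<pi> N CARD('z) \<delta> s z) \<or>
         (\<exists>s z k. k \<in> {1..N} \<and> trL (\<lambda>n. fst (h ! (n - 1))) (\<lambda>n. fst (snd (h ! (n - 1)))) (\<lambda>n. snd (snd (h ! (n - 1)))) N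
                \<in> EB q xt y N CARD('z) \<delta> s z k)"
      by (rule cover[OF N d0 d1 q_nonneg q_le1]) (use nQ in \<open>simp add: Q_def P_def\<close>)
    hence "(\<exists>s z. h \<in> EA \<pi> N C \<delta> s z) \<or> (\<exists>s z k. k \<in> {1..N} \<and> h \<in> EB q xt y N C \<delta> s z k)"
      unfolding trL_nth[OF hL] C_def .
    thus "h \<in> (\<Union>i\<in>I. E i)"
    proof
      assume "\<exists>s z. h \<in> EA \<pi> N C \<delta> s z"
      then obtain s z where "h \<in> EA \<pi> N C \<delta> s z" by blast
      hence "h \<in> E (z, 0, s)" "(z, 0, s) \<in> I" unfolding E_def I_def by auto
      thus ?thesis by blast
    next
      assume "\<exists>s z k. k \<in> {1..N} \<and> h \<in> EB q xt y N C \<delta> s z k"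
      then obtain s z k where "k \<in> {1..N}" "h \<in> EB q xt y N C \<delta> s z k" by blast
      hence "h \<in> E (z, k, s)" "(z, k, s) \<in> I" unfolding E_def I_def by auto
      thus ?thesis by blast
    qed
  qed
  define bd where "bd k = (if k = 0 then \<delta> / (4 * real C) else \<delta> / (6.6 * real C * (real k)\<^sup>2))" for k :: nat
  have C1: "real C \<ge> 1" unfolding C_def by simp
  have bnd_i: "(\<Sum>h\<in>E (z, k, s). Pr h) \<le> bd k" for z k s
  proof (cases "k = 0")
    case True
    have "(\<Sum>h\<in>E (z, k, s). Pr h) \<le> exp (- rA C \<delta>)"
      unfolding E_def using True
      by (simp, intro tail[where d="dA z (\<pi> z)" and c="\<lambda>h t. 1" and lam="sg s * tA C N \<delta>"] stepA)
         (auto simp: EA_def)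
    also have "exp (- rA C \<delta>) = bd k"
      unfolding rA_def bd_def using True d0 C1 by (simp add: exp_minus exp_ln)
    finally show ?thesis .
  next
    case False
    have "(\<Sum>h\<in>E (z, k, s). Pr h) \<le> exp (- rB C \<delta> k)"
      unfolding E_def using False
      by (simp, intro tail[where d="dB xt y z (2 ^ k) (q y xt z)" and c="cB xt z (2 ^ k)" and lam="sg s * tB C \<delta> k"] stepB)
         (auto simp: EB_def)
    also have "exp (- rB C \<delta> k) = bd k"
    proof -
      have kp: "real k > 0" using False by simp
      have a: "6.6 * real C / \<delta> > 0" using d0 C1 by simp
      have "exp (rB C \<delta> k) = exp (ln (real k) + ln (real k) + ln (6.6 * real C / \<delta>))"
        unfolding rB_def by (simp add: algebra_simps)
      also have "\<dots> = real k * real k * (6.6 * real C / \<delta>)"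
        unfolding exp_add using kp a by simp
      finally have "exp (rB C \<delta> k) = real k * real k * (6.6 * real C / \<delta>)" .
      thus ?thesis unfolding bd_def using False d0 C1 by (simp add: exp_minus power2_eq_square field_simps)
    qed
    finally show ?thesis .
  qed
  have meas_E: "{\<omega> \<in> space M. hist N \<omega> \<in> E i} \<in> sets M" for i
    by (rule hist_in_meas) simp
  have "(\<Sum>h\<in>Bd. Pr h) = measure M {\<omega> \<in> space M. hist N \<omega> \<in> Bd}"
    by (rule measure_hist_in[symmetric]) (auto simp: Bd_def L_def)
  also have "\<dots> \<le> measure M (\<Union>i\<in>I. {\<omega> \<in> space M. hist N \<omega> \<in> E i})"
    using cov finI meas_E by (intro finite_measure_mono) auto
  also have "\<dots> \<le> (\<Sum>i\<in>I. measure M {\<omega> \<in> space M. hist N \<omega> \<in> E i})"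
    using finI meas_E by (intro finite_measure_subadditive_finite) auto
  also have "\<dots> = (\<Sum>i\<in>I. \<Sum>h\<in>E i. Pr h)"
    using Esub by (intro sum.cong refl measure_hist_in) (auto simp: L_def)
  also have "\<dots> \<le> (\<Sum>i\<in>I. bd (fst (snd i)))"
    using bnd_i by (intro sum_mono) (auto simp: I_def)
  also have "\<dots> = real C * (2 * (\<Sum>k\<in>{0..N}. bd k))"
  proof -
    have a: "(\<Sum>i\<in>I. bd (fst (snd i))) = (\<Sum>z\<in>(UNIV :: 'z set). \<Sum>p\<in>{0..N} \<times> (UNIV :: bool set). bd (fst p))"
      unfolding I_def sum.cartesian_product by (rule sum.cong) auto
    have b: "(\<Sum>p\<in>{0..N} \<times> (UNIV :: bool set). bd (fst p)) = (\<Sum>k\<in>{0..N}. \<Sum>s\<in>(UNIV :: bool set). bd k)"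
      unfolding sum.cartesian_product by (rule sum.cong) auto
    show ?thesis unfolding a b by (simp add: C_def UNIV_bool sum_distrib_left)
  qed
  also have "\<dots> \<le> \<delta>"
  proof -
    have "(\<Sum>k\<in>{0..N}. bd k) = bd 0 + (\<Sum>k\<in>{1..N}. bd k)"
    proof -
      have "{0..N} = insert 0 {1..N}" by auto
      thus ?thesis by simp
    qed
    also have "(\<Sum>k\<in>{1..N}. bd k) = \<delta> / (6.6 * real C) * (\<Sum>k=1..N. 1 / (real k)\<^sup>2)"
      unfolding bd_def sum_distrib_left by (intro sum.cong) auto
    also have "\<dots> \<le> \<delta> / (6.6 * real C) * 1.65"
      using invsq[of N] d0 C1 by (intro mult_left_mono) auto
    finally have "(\<Sum>k\<in>{0..N}. bd k) \<le> \<delta> / (4 * real C) + \<delta> / (6.6 * real C) * 1.65"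
      by (simp add: bd_def)
    hence "real C * (2 * (\<Sum>k\<in>{0..N}. bd k)) \<le> real C * (2 * (\<delta> / (4 * real C) + \<delta> / (6.6 * real C) * 1.65))"
      using C1 by (intro mult_left_mono) auto
    also have "\<dots> = \<delta>" using C1 by (simp add: field_simps)
    finally show ?thesis .
  qed
  finally have "(\<Sum>h\<in>Bd. Pr h) \<le> \<delta>" .
  thus ?thesis
    unfolding P_def[symmetric] good_eq m_good using total split by linarith
qed

end
theorem theorem3:
  fixes M :: "'w measure"
    and X :: "nat \<Rightarrow> 'w \<Rightarrow> 'x::finite"
    and Y :: "nat \<Rightarrow> 'w \<Rightarrow> 'y::finite"
    and Z :: "nat \<Rightarrow> 'w \<Rightarrow> 'z::finite"
    and \<pi> :: "'z \<Rightarrow> real"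
    and q :: "'y \<Rightarrow> 'x \<Rightarrow> 'z \<Rightarrow> real"
    and N :: nat and \<delta> :: real and xt :: 'x and y :: 'y
  assumes "prob_space M"
    and "N \<ge> 1"
    and measX: "\<And>n. n \<in> {1..N} \<Longrightarrow> X n \<in> M \<rightarrow>\<^sub>M count_space UNIV"
    and measY: "\<And>n. n \<in> {1..N} \<Longrightarrow> Y n \<in> M \<rightarrow>\<^sub>M count_space UNIV"
    and measZ: "\<And>n. n \<in> {1..N} \<Longrightarrow> Z n \<in> M \<rightarrow>\<^sub>M count_space UNIV"
    and pi_nonneg: "\<And>z. \<pi> z \<ge> 0" and pi_sum: "(\<Sum>z\<in>UNIV. \<pi> z) = 1"
    and q_nonneg: "\<And>y' x z. q y' x z \<ge> 0"
    and q_sum: "\<And>x z. (\<Sum>y'\<in>UNIV. q y' x z) = 1"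
    and condZ: "\<And>n hs z. n \<in> {1..N} \<Longrightarrow>
        measure M {\<omega> \<in> space M. map (\<lambda>i. (X i \<omega>, Y i \<omega>, Z i \<omega>)) [1..<n] = hs \<and> Z n \<omega> = z}
        = \<pi> z * measure M {\<omega> \<in> space M. map (\<lambda>i. (X i \<omega>, Y i \<omega>, Z i \<omega>)) [1..<n] = hs}"
    and condY: "\<And>n hs z x y'. n \<in> {1..N} \<Longrightarrow>
        measure M {\<omega> \<in> space M. map (\<lambda>i. (X i \<omega>, Y i \<omega>, Z i \<omega>)) [1..<n] = hs
                                  \<and> Z n \<omega> = z \<and> X n \<omega> = x \<and> Y n \<omega> = y'}
        = q y' x z * measure M {\<omega> \<in> space M. map (\<lambda>i. (X i \<omega>, Y i \<omega>, Z i \<omega>)) [1..<n] = hs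
                                  \<and> Z n \<omega> = z \<and> X n \<omega> = x}"
    and "\<delta> > 0"
  shows "measure M {\<omega> \<in> space M.
           in_ci (\<lambda>n. X n \<omega>) (\<lambda>n. Y n \<omega>) (\<lambda>n. Z n \<omega>) N \<delta> y xt
                 (\<Sum>z\<in>UNIV. q y xt z * \<pi> z)} \<ge> 1 - \<delta>"
proof -
  interpret sm M X Y Z \<pi> q N
  proof (rule sm.intro)
    show "prob_space M" by (fact assms(1))
    show "sm_axioms M X Y Z \<pi> q N" by (rule sm_axioms.intro) (fact assms)+
  qed
  show ?thesis
  proof (cases "\<delta> < 1")
    case True
    show ?thesis by (rule main[OF assms(2) assms(12) True])
  next
    case False
    hence "1 - \<delta> \<le> 0" by simp
    thus ?thesis using measure_nonneg order_trans by blast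
  qed
qed

end
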